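(* Let $A$ be a non-negative, irreducible $d\times d$ matrix with $\rho(A)>1$, and let $M=(I-A^T)(I-A)$ and $N=(I-A)(I-A^T)$. Suppose an entrywise strictly positive matrix $X$ is a local minimum of problem (P). Then the following hold. - $X$ is a global minimum of (P). - Let $\mathbf v$ be the right leading eigenvector of $X$ with $\|\mathbf v\|=1$. Then $\mathbf v$ is an eigenvector of $M$ associated with its smallest eigenvalue $\mu$, and $\mu>0$. - The vector $\mathbf u=\frac1{\sqrt\mu}(A-I)\mathbf v$ is a non-negative left leading eigenvector of $X$ and an eigenvector of $N$ associated with its smallest eigenvalue. - $X=A-(A-I)\mathbf v\mathbf v^T$ and $\|X-A\|=\sqrt\mu$. In particular, if $M$ has no non-negative unit eigenvector $\mathbf v$ for its smallest eigenvalue $\mu$ such that $(A-I)\mathbf v\ge0$ and $A-(A-I)\mathbf v\mathbf v^T\ge0$, then (P) has no strictly positive local minimum.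
   Context: $\rho(\cdot)$ denotes spectral radius and $\|\cdot\|$ the Frobenius norm (Euclidean norm for vectors). Problem (P) for a non-negative square matrix $A$ is: minimize $\|X-A\|$ subject to $X\ge0$ (entrywise) and $\rho(X)\le1$. A local minimum of (P) is a feasible $X$ with a neighbourhood $U$ such that $\|Y-A\|\ge\|X-A\|$ for all feasible $Y\in U$. Leading eigenvectors are the non-negative eigenvectors for the eigenvalue $\rho(X)$ given by Perron–Frobenius. *)

theory Defs
  imports "HOL-Analysis.Analysis"
begin

text \<open>Matrices are real d x d matrices indexed by a finite type 'n (d = CARD('n)).
  The Frobenius norm of a matrix in real^'n^'n is the library norm (Euclidean norm
  of all entries); vectors likewise use the Euclidean norm.\<close>

fun matpow :: "real^'n^'n \<Rightarrow> nat \<Rightarrow> real^'n^'n" where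
  "matpow X 0 = mat 1"
| "matpow X (Suc k) = X ** matpow X k"

definition nonneg_mat :: "real^'n^'n \<Rightarrow> bool" where
  "nonneg_mat X \<longleftrightarrow> (\<forall>i j. X $ i $ j \<ge> 0)"

definition pos_mat :: "real^'n^'n \<Rightarrow> bool" where
  "pos_mat X \<longleftrightarrow> (\<forall>i j. X $ i $ j > 0)"

definition nonneg_vec :: "real^'n \<Rightarrow> bool" where
  "nonneg_vec v \<longleftrightarrow> (\<forall>i. v $ i \<ge> 0)"

definition irreducible_mat :: "real^'n^'n \<Rightarrow> bool" where
  "irreducible_mat X \<longleftrightarrow> (\<forall>i j. \<exists>k. matpow X k $ i $ j > 0)"

definition cmat :: "real^'n^'n \<Rightarrow> complex^'n^'n" where
  "cmat X = (\<chi> i j. complex_of_real (X $ i $ j))"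

definition is_eigenvalue :: "real^'n^'n \<Rightarrow> complex \<Rightarrow> bool" where
  "is_eigenvalue X l \<longleftrightarrow> (\<exists>v::complex^'n. v \<noteq> 0 \<and> cmat X *v v = l *s v)"

definition spectral_radius :: "real^'n^'n \<Rightarrow> real" where
  "spectral_radius X = Sup {cmod l | l. is_eigenvalue X l}"

definition feasible :: "real^'n^'n \<Rightarrow> bool" where
  "feasible X \<longleftrightarrow> nonneg_mat X \<and> spectral_radius X \<le> 1"

definition local_min :: "real^'n^'n \<Rightarrow> real^'n^'n \<Rightarrow> bool" where
  "local_min A X \<longleftrightarrow> feasible X \<and>
     (\<exists>e>0. \<forall>Y. feasible Y \<and> dist Y X < e \<longrightarrow> norm (Y - A) \<ge> norm (X - A))"

definition global_min :: "real^'n^'n \<Rightarrow> real^'n^'n \<Rightarrow> bool" where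
  "global_min A X \<longleftrightarrow> feasible X \<and> (\<forall>Y. feasible Y \<longrightarrow> norm (Y - A) \<ge> norm (X - A))"

definition right_leading_eigvec :: "real^'n^'n \<Rightarrow> real^'n \<Rightarrow> bool" where
  "right_leading_eigvec X v \<longleftrightarrow> nonneg_vec v \<and> v \<noteq> 0 \<and> X *v v = spectral_radius X *s v"

definition left_leading_eigvec :: "real^'n^'n \<Rightarrow> real^'n \<Rightarrow> bool" where
  "left_leading_eigvec X u \<longleftrightarrow> nonneg_vec u \<and> u \<noteq> 0 \<and> u v* X = spectral_radius X *s u"

definition smallest_eigenvalue :: "real^'n^'n \<Rightarrow> real \<Rightarrow> bool" where
  "smallest_eigenvalue M \<mu> \<longleftrightarrow> (\<exists>v. v \<noteq> 0 \<and> M *v v = \<mu> *s v) \<and>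
     (\<forall>l v. v \<noteq> 0 \<and> M *v v = l *s v \<longrightarrow> \<mu> \<le> l)"

definition outer :: "real^'n \<Rightarrow> real^'n \<Rightarrow> real^'n^'n" where
  "outer x y = (\<chi> i j. x $ i * y $ j)"

end

theory Submission
  imports Defs
begin


lemma outer_mult: "outer a b *v c = (b \<bullet> c) *s (a::real^'n)"
  by (simp add: outer_def matrix_vector_mult_def vec_eq_iff inner_vec_def sum_distrib_left sum_distrib_right mult_ac)

lemma vmult_outer: "c v* outer a b = (c \<bullet> a) *s (b::real^'n)"
  by (simp add: outer_def vector_matrix_mult_def vec_eq_iff inner_vec_def sum_distrib_left sum_distrib_right mult_ac)

lemma inner_outer: "outer a b \<bullet> (F::real^'n^'n) = a \<bullet> (F *v b)"
  by (simp add: outer_def matrix_vector_mult_def inner_vec_def sum_distrib_left mult_ac)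

lemma outer_inner_outer: "outer a b \<bullet> outer c d = (a \<bullet> c) * (b \<bullet> (d::real^'n))"
  by (simp add: inner_outer outer_mult scalar_mult_eq_scaleR inner_commute)

lemma norm_outer: "norm (outer a b) = norm a * norm (b::real^'n)"
proof -
  have "norm (outer a b) ^ 2 = (norm a * norm b) ^ 2"
    by (simp add: power2_norm_eq_inner outer_inner_outer power_mult_distrib)
  then show ?thesis by (simp add: power2_eq_iff_nonneg)
qed

lemma norm_mv_le: "norm ((B::real^'n^'m) *v x) \<le> norm B * norm x"
proof -
  have "norm (B *v x) ^ 2 = (\<Sum>i\<in>UNIV. ((B *v x)$i) * ((B *v x)$i))"
    by (simp add: power2_norm_eq_inner inner_vec_def)
  also have "\<dots> = (\<Sum>i\<in>UNIV. (B$i \<bullet> x)^2)"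
    by (simp only: matrix_vector_mul_component power2_eq_square)
  also have "\<dots> \<le> (\<Sum>i\<in>UNIV. (B$i \<bullet> B$i) * (x \<bullet> x))"
  proof (rule sum_mono)
    fix i
    have "\<bar>B$i \<bullet> x\<bar> \<le> norm (B$i) * norm x" by (rule Cauchy_Schwarz_ineq2)
    then have "(B$i \<bullet> x)^2 \<le> (norm (B$i) * norm x)^2"
      by (metis abs_ge_zero power2_abs power_mono)
    then show "(B$i \<bullet> x)^2 \<le> (B$i \<bullet> B$i) * (x \<bullet> x)"
      by (simp add: power_mult_distrib power2_norm_eq_inner)
  qed
  also have "\<dots> = (norm B * norm x)^2"
    by (simp add: power_mult_distrib power2_norm_eq_inner inner_vec_def sum_distrib_right)
  finally show ?thesis
    by (meson mult_nonneg_nonneg norm_ge_zero power2_le_imp_le)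
qed

lemma inner_transpose: "x \<bullet> (transpose B *v y) = ((B::real^'n^'n) *v x) \<bullet> y"
  by (metis dot_lmul_matrix inner_commute transpose_matrix_vector)



lemma real_eig:
  fixes Y :: "real^'n^'n" and x :: "real^'n"
  assumes "Y *v x = c *s x" "x \<noteq> 0"
  shows "is_eigenvalue Y (complex_of_real c)"
proof -
  let ?y = "(\<chi> i. complex_of_real (x$i)) :: complex^'n"
  have "?y \<noteq> 0" using assms(2) by (simp add: vec_eq_iff)
  moreover have "cmat Y *v ?y = complex_of_real c *s ?y"
  proof -
    have "(cmat Y *v ?y)$i = complex_of_real ((Y *v x)$i)" for i
      by (simp add: cmat_def matrix_vector_mult_def)
    then show ?thesis using assms(1) by (simp add: vec_eq_iff)
  qed
  ultimately show ?thesis unfolding is_eigenvalue_def by blast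
qed

lemma max_index:
  fixes q :: "'n::finite \<Rightarrow> real"
  obtains i0 where "\<And>j. q j \<le> q i0"
proof -
  have "finite (range q)" by simp
  then have "Max (range q) \<in> range q" by (intro Max_in) auto
  then obtain i0 where "q i0 = Max (range q)" by (metis imageE)
  moreover have "\<And>j. q j \<le> Max (range q)" by (intro Max_ge) auto
  ultimately show ?thesis using that by metis
qed

lemma collatz_gen:
  assumes Y: "nonneg_mat Y" and w: "\<And>i. w$i > 0"
    and x: "x \<noteq> 0" and ev: "cmat Y *v x = l *s x"
  obtains i where "cmod l * cmod (x$i) \<le> (cmod (x$i) / w$i) * (Y *v w)$i" "cmod (x$i) > 0"
proof -
  define q where "q j = cmod (x$j) / w$j" for j
  obtain i0 where i0: "\<And>j. q j \<le> q i0" using max_index by blast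
  from x obtain j where "x$j \<noteq> 0" by (auto simp: vec_eq_iff)
  then have "q j > 0" using w[of j] by (simp add: q_def)
  then have qpos: "q i0 > 0" using i0[of j] by linarith
  then have xi0: "cmod (x$i0) > 0" using w[of i0] by (simp add: q_def zero_less_divide_iff)
  have "cmod l * cmod (x$i0) = cmod ((cmat Y *v x)$i0)"
    by (simp add: ev norm_mult)
  also have "\<dots> = cmod (\<Sum>j\<in>UNIV. complex_of_real (Y$i0$j) * x$j)"
    by (simp add: cmat_def matrix_vector_mult_def)
  also have "\<dots> \<le> (\<Sum>j\<in>UNIV. cmod (complex_of_real (Y$i0$j) * x$j))"
    by (rule norm_sum)
  also have "\<dots> = (\<Sum>j\<in>UNIV. Y$i0$j * cmod (x$j))"
    using Y by (simp add: norm_mult nonneg_mat_def)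
  also have "\<dots> \<le> (\<Sum>j\<in>UNIV. Y$i0$j * (q i0 * w$j))"
  proof (rule sum_mono)
    fix j
    have "cmod (x$j) = q j * w$j" using w[of j] by (simp add: q_def)
    also have "\<dots> \<le> q i0 * w$j" using i0[of j] w[of j] by (simp add: mult_right_mono)
    finally show "Y$i0$j * cmod (x$j) \<le> Y$i0$j * (q i0 * w$j)"
      using Y by (simp add: nonneg_mat_def mult_left_mono)
  qed
  also have "\<dots> = q i0 * (Y *v w)$i0"
    by (simp add: matrix_vector_mult_def sum_distrib_left mult_ac)
  finally show ?thesis using that[of i0] xi0 by (simp add: q_def)
qed

lemma collatz_le:
  assumes Y: "nonneg_mat Y" and w: "\<And>i. w$i > 0" and le: "\<And>i. (Y *v w)$i \<le> r * w$i"
    and ev: "is_eigenvalue Y l"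
  shows "cmod l \<le> r"
proof -
  from ev obtain x where x: "x \<noteq> 0" "cmat Y *v x = l *s x" unfolding is_eigenvalue_def by blast
  from collatz_gen[OF Y w x] obtain i where
    i: "cmod l * cmod (x$i) \<le> (cmod (x$i) / w$i) * (Y *v w)$i" "cmod (x$i) > 0" by blast
  have "(cmod (x$i) / w$i) * (Y *v w)$i \<le> (cmod (x$i) / w$i) * (r * w$i)"
    using le[of i] w[of i] i(2) by (intro mult_left_mono) auto
  also have "\<dots> = r * cmod (x$i)" using w[of i] by simp
  finally have "cmod l * cmod (x$i) \<le> r * cmod (x$i)" using i(1) by linarith
  then show ?thesis using i(2) by (rule mult_right_le_imp_le)
qed

lemma collatz_less:
  assumes Y: "nonneg_mat Y" and w: "\<And>i. w$i > 0" and le: "\<And>i. (Y *v w)$i < w$i"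
    and ev: "is_eigenvalue Y l"
  shows "cmod l < 1"
proof -
  from ev obtain x where x: "x \<noteq> 0" "cmat Y *v x = l *s x" unfolding is_eigenvalue_def by blast
  from collatz_gen[OF Y w x] obtain i where
    i: "cmod l * cmod (x$i) \<le> (cmod (x$i) / w$i) * (Y *v w)$i" "cmod (x$i) > 0" by blast
  have "(cmod (x$i) / w$i) * (Y *v w)$i < (cmod (x$i) / w$i) * (w$i)"
    using le[of i] w[of i] i(2) by (intro mult_strict_left_mono) auto
  also have "\<dots> = 1 * cmod (x$i)" using w[of i] by simp
  finally have "cmod l * cmod (x$i) < 1 * cmod (x$i)" using i(1) by linarith
  then show ?thesis using i(2) by (meson less_imp_le mult_right_less_imp_less)
qed

lemma eig_bound:
  assumes ev: "is_eigenvalue Y l"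
  shows "cmod l \<le> (\<Sum>i\<in>UNIV. \<Sum>j\<in>UNIV. \<bar>Y$i$j\<bar>)"
proof -
  from ev obtain x where x: "x \<noteq> 0" "cmat Y *v x = l *s x" unfolding is_eigenvalue_def by blast
  define q where "q j = cmod (x$j)" for j
  obtain i0 where i0: "\<And>j. q j \<le> q i0" using max_index by blast
  from x obtain j where "x$j \<noteq> 0" by (auto simp: vec_eq_iff)
  then have "q i0 > 0" using i0[of j] by (simp add: q_def) (smt (verit) norm_ge_zero zero_less_norm_iff)
  have "cmod l * q i0 = cmod ((cmat Y *v x)$i0)"
    by (simp add: x(2) norm_mult q_def)
  also have "\<dots> = cmod (\<Sum>j\<in>UNIV. complex_of_real (Y$i0$j) * x$j)"
    by (simp add: cmat_def matrix_vector_mult_def)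
  also have "\<dots> \<le> (\<Sum>j\<in>UNIV. cmod (complex_of_real (Y$i0$j) * x$j))"
    by (rule norm_sum)
  also have "\<dots> \<le> (\<Sum>j\<in>UNIV. \<bar>Y$i0$j\<bar> * q i0)"
    by (intro sum_mono) (simp add: norm_mult q_def[symmetric] i0 mult_left_mono)
  also have "\<dots> = (\<Sum>j\<in>UNIV. \<bar>Y$i0$j\<bar>) * q i0"
    by (simp add: sum_distrib_right)
  finally have "cmod l \<le> (\<Sum>j\<in>UNIV. \<bar>Y$i0$j\<bar>)" using \<open>q i0 > 0\<close> by simp
  also have "\<dots> \<le> (\<Sum>i\<in>UNIV. \<Sum>j\<in>UNIV. \<bar>Y$i$j\<bar>)"
    by (rule member_le_sum) (auto intro: sum_nonneg)
  finally show ?thesis .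
qed

lemma eig_bdd: "bdd_above {cmod l | l. is_eigenvalue Y l}"
  unfolding bdd_above_def using eig_bound by blast

lemma le_sr: "is_eigenvalue Y l \<Longrightarrow> cmod l \<le> spectral_radius Y"
  unfolding spectral_radius_def by (rule cSup_upper) (auto intro: eig_bdd)



lemma nonneg_eig_exists:
  fixes Y :: "real^'n^'n"
  assumes Y: "nonneg_mat Y"
  shows "\<exists>x c. nonneg_vec x \<and> x \<noteq> 0 \<and> c \<ge> 0 \<and> Y *v x = c *s x"
proof -
  define S where "S = {x::real^'n. (\<forall>i. 0 \<le> x$i) \<and> sum (\<lambda>i. x$i) UNIV = 1}"
  have S0: "x \<noteq> 0" if "x \<in> S" for x using that by (auto simp: S_def)
  have Ynn: "(Y *v x)$i \<ge> 0" if "x \<in> S" for x i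
    using that Y by (auto simp: S_def nonneg_mat_def matrix_vector_mult_def intro!: sum_nonneg)
  show ?thesis
  proof (cases "\<exists>x\<in>S. Y *v x = 0")
    case True
    then obtain x where "x \<in> S" "Y *v x = 0" by blast
    then show ?thesis using S0 by (intro exI[of _ x] exI[of _ 0]) (auto simp: S_def nonneg_vec_def)
  next
    case False
    define g where "g x = sum (\<lambda>i. (Y *v x)$i) UNIV" for x
    define f where "f x = (1 / g x) *\<^sub>R (Y *v x)" for x
    have gpos: "g x > 0" if "x \<in> S" for x
    proof -
      from False that obtain i where "(Y *v x)$i \<noteq> 0" by (auto simp: vec_eq_iff)
      then have "(Y *v x)$i > 0" using Ynn[OF that, of i] by linarith
      moreover have "(Y *v x)$i \<le> g x"
        unfolding g_def by (rule member_le_sum) (use Ynn[OF that] in auto)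
      ultimately show ?thesis by linarith
    qed
    have contY: "continuous_on S (\<lambda>x. Y *v x)"
      by (intro linear_continuous_on matrix_vector_mul_bounded_linear)
    have contg: "continuous_on S g"
      unfolding g_def by (intro continuous_on_sum continuous_on_component contY)
    have gnz: "\<forall>x\<in>S. g x \<noteq> 0" using gpos by (metis less_irrefl)
    have contf: "continuous_on S f"
      unfolding f_def
      by (intro continuous_on_scaleR continuous_on_divide continuous_on_const contg contY gnz)
    have cl: "closed S"
    proof -
      have "S = {x. \<forall>i. 0 \<le> x$i} \<inter> {x. sum (\<lambda>i. x$i) UNIV = 1}" by (auto simp: S_def)
      moreover have "closed {x::real^'n. sum (\<lambda>i. x$i) UNIV = 1}"
        by (intro closed_Collect_eq continuous_on_sum continuous_on_component continuous_on_id continuous_on_const)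
      ultimately show ?thesis using closed_positive_orthant by auto
    qed
    have bd: "bounded S"
    proof -
      have "norm x \<le> 1" if "x \<in> S" for x
      proof -
        have "norm x \<le> sum (\<lambda>i. \<bar>x$i\<bar>) UNIV" by (rule norm_le_l1_cart)
        also have "\<dots> = 1" using that by (simp add: S_def)
        finally show ?thesis .
      qed
      then show ?thesis unfolding bounded_iff by blast
    qed
    have cv: "convex S"
      unfolding convex_def S_def
      by (auto simp: sum.distrib sum_distrib_left[symmetric])
    have ne: "S \<noteq> {}"
    proof -
      have "(\<chi> i. 1 / real CARD('n)) \<in> S" by (simp add: S_def)
      then show ?thesis by blast
    qed
    have fS: "f \<in> S \<rightarrow> S"
    proof
      fix x assume x: "x \<in> S"
      have "0 \<le> f x $ i" for i using Ynn[OF x, of i] gpos[OF x] by (simp add: f_def)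
      moreover have "sum (\<lambda>i. f x $ i) UNIV = 1"
        using gpos[OF x] by (simp add: f_def g_def sum_divide_distrib[symmetric])
      ultimately show "f x \<in> S" by (simp add: S_def)
    qed
    obtain x where x: "x \<in> S" "f x = x"
      using brouwer[OF compact_eq_bounded_closed[THEN iffD2, OF conjI[OF bd cl]] cv ne contf fS] by blast
    have "Y *v x = g x *s x"
    proof -
      have "g x *s x = g x *s f x" using x by simp
      also have "\<dots> = Y *v x" using gpos[OF x(1)] by (simp add: f_def scalar_mult_eq_scaleR)
      finally show ?thesis by simp
    qed
    then show ?thesis using S0[OF x(1)] gpos[OF x(1)] x(1)
      by (intro exI[of _ x] exI[of _ "g x"]) (auto simp: S_def nonneg_vec_def)
  qed
qed

lemma eig_exists: "nonneg_mat Y \<Longrightarrow> \<exists>l. is_eigenvalue Y l"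
  using nonneg_eig_exists real_eig by blast

lemma sr_le:
  assumes Y: "nonneg_mat Y" and w: "\<And>i. w$i > 0" and le: "\<And>i. (Y *v w)$i \<le> r * w$i"
  shows "spectral_radius Y \<le> r"
  unfolding spectral_radius_def
  using eig_exists[OF Y] collatz_le[OF Y w le] by (intro cSup_least) auto

lemma sr_less:
  assumes Y: "nonneg_mat Y" and w: "\<And>i. w$i > 0" and le: "\<And>i. (Y *v w)$i < w$i"
  shows "spectral_radius Y \<le> 1"
  unfolding spectral_radius_def
  using eig_exists[OF Y] collatz_less[OF Y w le] by (intro cSup_least) (auto intro: less_imp_le)

lemma perron_pos:
  fixes X :: "real^'n^'n"
  assumes X: "pos_mat X"
  shows "\<exists>v. (\<forall>i. v$i > 0) \<and> X *v v = spectral_radius X *s v"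
proof -
  have Xn: "nonneg_mat X" using X by (auto simp: pos_mat_def nonneg_mat_def less_imp_le)
  obtain x c where xc: "nonneg_vec x" "x \<noteq> 0" "c \<ge> 0" "X *v x = c *s x"
    using nonneg_eig_exists[OF Xn] by blast
  have Xx: "(X *v x)$i > 0" for i
  proof -
    from xc(2) obtain j where "x$j \<noteq> 0" by (auto simp: vec_eq_iff)
    then have j: "x$j > 0" using xc(1) by (auto simp: nonneg_vec_def less_le)
    have "X$i$j * x$j > 0" using X j by (simp add: pos_mat_def)
    also have "\<dots> \<le> (\<Sum>k\<in>UNIV. X$i$k * x$k)"
      by (rule member_le_sum) (use X xc(1) in \<open>auto intro: mult_nonneg_nonneg less_imp_le simp: pos_mat_def nonneg_vec_def\<close>)
    also have "\<dots> = (X *v x)$i" by (simp add: matrix_vector_mult_def)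
    finally show ?thesis .
  qed
  have cpos: "c > 0" and xpos: "x$i > 0" for i
  proof -
    have "c * x$i > 0" for i using Xx[of i] xc(4) by simp
    then show "c > 0" using xc(1) xc(3) by (metis less_le mult_eq_0_iff nonneg_vec_def mult_zero_left)
    then show "x$i > 0" using \<open>\<And>i. c * x$i > 0\<close>[of i] by (simp add: zero_less_mult_iff)
  qed
  have "spectral_radius X \<le> c"
    by (rule sr_le[OF Xn xpos]) (simp add: xc(4))
  moreover have "c \<le> spectral_radius X"
    using le_sr[OF real_eig[OF xc(4) xc(2)]] xc(3) by simp
  ultimately show ?thesis using xpos xc(4) by (intro exI[of _ x]) auto
qed



definition Qc :: "real^'n^'n \<Rightarrow> bool" where
  "Qc Z \<longleftrightarrow> (\<exists>w. (\<forall>i. w$i > 0) \<and> (\<forall>i. (Z *v w)$i < w$i))"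

lemma monotone_K1:
  fixes Z :: "real^'n^'n"
  assumes Z: "nonneg_mat Z" and w: "\<And>i. w$i > 0" and lt: "\<And>i. (Z *v w)$i < w$i"
    and ge: "\<And>i. (x - Z *v x)$i \<ge> 0"
  shows "x$i \<ge> 0"
proof (rule ccontr)
  assume "\<not> x$i \<ge> 0"
  then have xi: "x$i < 0" by simp
  define q where "q j = - x$j / w$j" for j
  obtain i0 where i0: "\<And>j. q j \<le> q i0" using max_index by blast
  have "q i > 0" using xi w[of i] by (simp add: q_def divide_neg_pos)
  then have c: "q i0 > 0" using i0[of i] by linarith
  have xj: "x$j \<ge> - q i0 * w$j" for j
  proof -
    have "- x$j = q j * w$j" using w[of j] by (simp add: q_def)
    also have "\<dots> \<le> q i0 * w$j" using i0[of j] w[of j] by (simp add: mult_right_mono)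
    finally show ?thesis by simp
  qed
  have xi0: "x$i0 = - q i0 * w$i0" using w[of i0] by (simp add: q_def)
  have "(Z *v x)$i0 = (\<Sum>j\<in>UNIV. Z$i0$j * x$j)" by (simp add: matrix_vector_mult_def)
  also have "\<dots> \<ge> (\<Sum>j\<in>UNIV. Z$i0$j * (- q i0 * w$j))"
    using Z xj by (intro sum_mono mult_left_mono) (auto simp: nonneg_mat_def)
  finally have "(Z *v x)$i0 \<ge> - q i0 * (Z *v w)$i0"
    by (simp add: matrix_vector_mult_def sum_distrib_left mult_ac)
  then have "(x - Z *v x)$i0 \<le> q i0 * ((Z *v w)$i0 - w$i0)"
    using xi0 by (simp add: algebra_simps)
  also have "\<dots> < 0" using c lt[of i0] by (simp add: mult_pos_neg)
  finally show False using ge[of i0] by simp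
qed

lemma cont_det:
  fixes F :: "real \<Rightarrow> real^'n^'n"
  assumes "continuous_on S F"
  shows "continuous_on S (\<lambda>t. det (F t))"
  unfolding det_def
  by (intro continuous_on_sum continuous_on_mult continuous_on_const continuous_on_prod
      continuous_on_component assms)

lemma homotopy:
  fixes Z :: "real \<Rightarrow> real^'n^'n"
  assumes cont: "continuous_on {0..1} Z"
    and nn: "\<And>t. t \<in> {0..1} \<Longrightarrow> nonneg_mat (Z t)"
    and inj: "\<And>t x. t \<in> {0..1} \<Longrightarrow> Z t *v x = x \<Longrightarrow> x = 0"
    and Q0: "Qc (Z 0)"
  shows "Qc (Z 1)"
proof -
  define W where "W t = mat 1 - Z t" for t
  have detW: "det (W t) \<noteq> 0" if t: "t \<in> {0..1}" for t
  proof -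
    have "\<forall>x. W t *v x = 0 \<longrightarrow> x = 0"
      using inj[OF t] by (auto simp: W_def matrix_vector_mult_diff_rdistrib)
    then have "invertible (W t)"
      using matrix_left_invertible_ker invertible_left_inverse by blast
    then show ?thesis using invertible_det_nz by blast
  qed
  define xs where "xs t = (\<chi> k. det (\<chi> i j. if j = k then (1::real^'n)$i else W t $ i $ j) / det (W t))" for t
  have Wxs: "W t *v xs t = 1" if "t \<in> {0..1}" for t
    using cramer[OF detW[OF that], of "xs t" 1] by (simp add: xs_def)
  have fix_eq: "xs t $ k = 1 + (Z t *v xs t) $ k" if "t \<in> {0..1}" for t k
  proof -
    have "(W t *v xs t) $ k = 1" using Wxs[OF that] by simp
    then show ?thesis by (simp add: W_def matrix_vector_mult_diff_rdistrib)
  qed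
  have K2: "xs t $ k \<ge> 1" if t: "t \<in> {0..1}" and nng: "\<And>k. xs t $ k \<ge> 0" for t k
  proof -
    have "(Z t *v xs t) $ k \<ge> 0"
      using nn[OF t] nng by (auto simp: matrix_vector_mult_def nonneg_mat_def intro!: sum_nonneg)
    then show ?thesis using fix_eq[OF t] by simp
  qed
  have contW: "continuous_on {0..1} W"
    unfolding W_def by (intro continuous_on_diff continuous_on_const cont)
  have contxs: "continuous_on {0..1} (\<lambda>t. xs t $ k)" for k
  proof -
    have c1: "continuous_on {0..1} (\<lambda>t. (\<chi> i j. if j = k then (1::real^'n)$i else W t $ i $ j))"
    proof (intro continuous_on_vec_lambda)
      fix i j
      show "continuous_on {0..1} (\<lambda>t. if j = k then (1::real^'n)$i else W t $ i $ j)"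
        by (cases "j = k") (simp_all add: continuous_on_const continuous_on_component contW)
    qed
    show ?thesis unfolding xs_def
      using detW by (simp, intro continuous_on_divide cont_det c1 contW) auto
  qed
  define f where "f t = (\<Sum>k\<in>UNIV. max 0 (1/2 - xs t $ k))" for t
  have contf: "continuous_on {0..1} f"
    unfolding f_def by (intro continuous_on_sum continuous_on_max continuous_on_const continuous_on_diff contxs)
  have dich: "f t \<ge> 1/2" if t: "t \<in> {0..1}" and nz: "f t \<noteq> 0" for t
  proof -
    from nz obtain k where "max 0 (1/2 - xs t $ k) \<noteq> 0" unfolding f_def
      by (metis (no_types, lifting) sum.neutral)
    then have "xs t $ k < 1" by (simp add: max_def split: if_splits)
    then obtain j where j: "xs t $ j < 0" using K2[OF t] by (meson not_le)
    have "1/2 \<le> max 0 (1/2 - xs t $ j)" using j by simp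
    also have "\<dots> \<le> f t" unfolding f_def by (rule member_le_sum) auto
    finally show ?thesis .
  qed
  have f0: "f 0 = 0"
  proof -
    obtain w where w: "\<And>i. w$i > 0" "\<And>i. (Z 0 *v w)$i < w$i" using Q0 unfolding Qc_def by blast
    have "xs 0 $ k \<ge> 0" for k
    proof (rule monotone_K1[OF nn w])
      fix i
      have "(xs 0 - Z 0 *v xs 0) $ i = (W 0 *v xs 0) $ i"
        by (simp add: W_def matrix_vector_mult_diff_rdistrib)
      also have "\<dots> = 1" using Wxs[of 0] by simp
      finally show "(xs 0 - Z 0 *v xs 0) $ i \<ge> 0" by simp
    qed simp
    then have ge: "xs 0 $ k \<ge> 1" for k using K2[of 0] by simp
    have "max 0 (1/2 - xs 0 $ k) = 0" for k using ge[of k] by (simp add: max_def)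
    then show ?thesis unfolding f_def by (intro sum.neutral) simp
  qed
  have f1: "f 1 = 0"
  proof (rule ccontr)
    assume "f 1 \<noteq> 0"
    then have "f 1 \<ge> 1/2" using dich[of 1] by simp
    then obtain t where t: "0 \<le> t" "t \<le> 1" "f t = 1/4"
      using IVT'[of f 0 "1/4" 1] f0 contf by auto
    then show False using dich[of t] by simp
  qed
  have "xs 1 $ k \<ge> 1/2" for k
  proof -
    have "max 0 (1/2 - xs 1 $ k) \<le> f 1" unfolding f_def by (rule member_le_sum) auto
    then show ?thesis using f1 by simp
  qed
  then have "xs 1 $ k \<ge> 0" for k by (meson dual_order.trans less_eq_real_def half_gt_zero zero_less_one)
  then have ge1: "xs 1 $ k \<ge> 1" for k using K2[of 1] by simp
  show ?thesis unfolding Qc_def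
  proof (intro exI[of _ "xs 1"] conjI allI)
    fix i
    show "xs 1 $ i > 0" using ge1[of i] by simp
    show "(Z 1 *v xs 1) $ i < xs 1 $ i" using fix_eq[of 1 i] by simp
  qed
qed



lemma scaleR_mv: "(k *\<^sub>R (A::real^'n^'m)) *v x = k *\<^sub>R (A *v x)"
  by (simp add: matrix_vector_mult_def vec_eq_iff sum_distrib_left mult_ac)

lemma global_bound:
  fixes A Y :: "real^'n^'n"
  assumes A: "nonneg_mat A" and rhoA: "spectral_radius A > 1" and s: "s > 0"
    and lower: "\<And>h. norm ((A - mat 1) *v h) \<ge> s * norm h"
    and Y: "nonneg_mat Y" and rhoY: "spectral_radius Y \<le> 1"
  shows "norm (Y - A) \<ge> s"
proof (rule ccontr)
  assume "\<not> norm (Y - A) \<ge> s"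
  then have lt: "norm (Y - A) < s" by simp
  define \<delta> where "\<delta> = s - norm (Y - A)"
  have \<delta>: "\<delta> > 0" using lt by (simp add: \<delta>_def)
  define a where "a = 1 - min (1/2) (\<delta> / (2 * (norm Y + 1)))"
  have "2 * (norm Y + 1) > 0" by (smt (verit) norm_ge_zero)
  then have "\<delta> / (2 * (norm Y + 1)) > 0" using \<delta> by simp
  then have a: "a \<ge> 1/2" "a < 1" by (auto simp: a_def min_def)
  have "(1 - a) * norm Y \<le> (\<delta> / (2 * (norm Y + 1))) * norm Y"
    by (intro mult_right_mono) (auto simp: a_def)
  also have "\<dots> < \<delta>"
  proof -
    have "norm Y < 2 * (norm Y + 1)" by (smt (verit) norm_ge_zero)
    then have "norm Y / (2 * (norm Y + 1)) < 1" using \<open>2 * (norm Y + 1) > 0\<close> by (simp add: divide_less_eq)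
    then have "\<delta> * (norm Y / (2 * (norm Y + 1))) < \<delta> * 1" by (rule mult_strict_left_mono[OF _ \<delta>])
    then have "\<delta> * (norm Y / (2 * (norm Y + 1))) < \<delta>" by (simp only: mult_1_right)
    moreover have "\<delta> / (2 * (norm Y + 1)) * norm Y = \<delta> * (norm Y / (2 * (norm Y + 1)))" by simp
    ultimately show ?thesis by linarith
  qed
  finally have small: "(1 - a) * norm Y < \<delta>" .
  have aY: "norm (a *\<^sub>R Y - A) < s"
  proof -
    have "a *\<^sub>R Y - A = (Y - A) - (1 - a) *\<^sub>R Y" by (simp add: algebra_simps)
    then have "norm (a *\<^sub>R Y - A) \<le> norm (Y - A) + (1 - a) * norm Y"
      using a by (metis norm_triangle_ineq4 norm_scaleR abs_of_nonneg diff_ge_0_iff_ge less_imp_le)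
    then show ?thesis using small by (simp add: \<delta>_def)
  qed
  have Q1: "Qc (a *\<^sub>R Y)"
  proof -
    define Z where "Z t = (t * a) *\<^sub>R Y" for t :: real
    have "Qc (Z 1)"
    proof (rule homotopy)
      show "continuous_on {0..1} Z" unfolding Z_def by (intro continuous_intros)
      show "nonneg_mat (Z t)" if "t \<in> {0..1}" for t
        using that a Y by (auto simp: Z_def nonneg_mat_def)
      show "x = 0" if t: "t \<in> {0..1}" and x: "Z t *v x = x" for t x
      proof (rule ccontr)
        assume x0: "x \<noteq> 0"
        have "t \<noteq> 0" using x x0 by (auto simp: Z_def scaleR_mv)
        then have tp: "t * a > 0" using t a by auto
        have "Y *v x = (1 / (t * a)) *s x"
        proof -
          have "(t * a) *\<^sub>R (Y *v x) = x" using x by (simp add: Z_def scaleR_mv)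
          then have "Y *v x = (1 / (t * a)) *\<^sub>R x" using tp
            by (metis divide_inverse_commute eq_vector_fraction_iff less_irrefl mult_1 scaleR_scaleR)
          then show ?thesis by (simp add: scalar_mult_eq_scaleR)
        qed
        from le_sr[OF real_eig[OF this x0]] have "\<bar>1 / (t * a)\<bar> \<le> spectral_radius Y"
          by (simp only: norm_of_real)
        then have "1 / (t * a) \<le> spectral_radius Y" using tp by simp
        then have "1 / (t * a) \<le> 1" using rhoY by linarith
        moreover have "t * a < 1"
        proof -
          have "t * a \<le> 1 * a" using t a by (intro mult_right_mono) auto
          then show ?thesis using a by linarith
        qed
        ultimately show False using tp by (simp add: divide_le_eq)
      qed
      show "Qc (Z 0)" unfolding Qc_def Z_def
        by (intro exI[of _ 1]) (simp add: matrix_vector_mult_def)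
    qed
    then show ?thesis by (simp add: Z_def)
  qed
  have "Qc A"
  proof -
    define Z where "Z t = a *\<^sub>R Y + t *\<^sub>R (A - a *\<^sub>R Y)" for t :: real
    have "Qc (Z 1)"
    proof (rule homotopy)
      show "continuous_on {0..1} Z" unfolding Z_def by (intro continuous_intros)
      show "nonneg_mat (Z t)" if "t \<in> {0..1}" for t
      proof -
        have "Z t $ i $ j = (1 - t) * a * Y $ i $ j + t * A $ i $ j" for i j
          by (simp add: Z_def algebra_simps)
        then show ?thesis using that a Y A by (auto simp: nonneg_mat_def intro!: add_nonneg_nonneg mult_nonneg_nonneg)
      qed
      show "x = 0" if t: "t \<in> {0..1}" and x: "Z t *v x = x" for t x
      proof -
        have "(A - mat 1) *v x = A *v x - Z t *v x" using x by (simp add: matrix_vector_mult_diff_rdistrib)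
        also have "\<dots> = (A - Z t) *v x" by (simp add: matrix_vector_mult_diff_rdistrib)
        also have "A - Z t = (1 - t) *\<^sub>R (A - a *\<^sub>R Y)" by (simp add: Z_def algebra_simps)
        finally have eq: "(A - mat 1) *v x = (1 - t) *\<^sub>R ((A - a *\<^sub>R Y) *v x)" by (simp add: scaleR_mv)
        have "s * norm x \<le> norm ((A - mat 1) *v x)" by (rule lower)
        also have "\<dots> = (1 - t) * norm ((A - a *\<^sub>R Y) *v x)" using t by (simp add: eq)
        also have "\<dots> \<le> norm ((A - a *\<^sub>R Y) *v x)"
          using t by (intro mult_left_le_one_le) auto
        also have "\<dots> \<le> norm (A - a *\<^sub>R Y) * norm x" by (rule norm_mv_le)
        finally have "s * norm x \<le> norm (A - a *\<^sub>R Y) * norm x" .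
        moreover have "norm (A - a *\<^sub>R Y) < s" using aY by (simp add: norm_minus_commute)
        ultimately show "x = 0"
          by (metis mult_right_less_imp_less norm_ge_zero norm_zero not_le mult_strict_right_mono zero_less_norm_iff)
      qed
      show "Qc (Z 0)" using Q1 by (simp add: Z_def)
    qed
    then show ?thesis by (simp add: Z_def)
  qed
  then obtain w where w: "\<And>i. w$i > 0" "\<And>i. (A *v w)$i < w$i" unfolding Qc_def by blast
  from sr_less[OF A w] rhoA show False by simp
qed



lemma lm_eventually:
  assumes lm: "local_min A X" and tY: "(Y \<longlongrightarrow> X) F"
    and fe: "\<forall>\<^sub>F t in F. feasible (Y t)"
  shows "\<forall>\<^sub>F t in F. norm (Y t - A) \<ge> norm (X - A)"
proof -
  from lm obtain e where e: "e > 0" "\<And>Z. feasible Z \<and> dist Z X < e \<Longrightarrow> norm (Z - A) \<ge> norm (X - A)"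
    unfolding local_min_def by blast
  have "\<forall>\<^sub>F t in F. dist (Y t) X < e" using tY e(1) by (rule tendstoD)
  with fe show ?thesis by eventually_elim (use e(2) in blast)
qed

lemma ev_pos:
  fixes Y :: "'a \<Rightarrow> real^'n^'n"
  assumes "(Y \<longlongrightarrow> X) F" "pos_mat X"
  shows "\<forall>\<^sub>F t in F. pos_mat (Y t)"
proof -
  have "\<forall>\<^sub>F t in F. Y t $ i $ j > 0" for i j
  proof -
    have "((\<lambda>t. Y t $ i $ j) \<longlongrightarrow> X $ i $ j) F" by (intro tendsto_vec_nth assms(1))
    then show ?thesis using assms(2) unfolding pos_mat_def by (auto intro: order_tendstoD)
  qed
  then show ?thesis unfolding pos_mat_def by (simp add: eventually_all_finite)
qed

lemma ev_posvec:
  fixes w :: "'a \<Rightarrow> real^'n"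
  assumes "(w \<longlongrightarrow> v) F" "\<And>i. v$i > 0"
  shows "\<forall>\<^sub>F t in F. \<forall>i. w t $ i > 0"
proof -
  have "\<forall>\<^sub>F t in F. w t $ i > 0" for i
  proof -
    have "((\<lambda>t. w t $ i) \<longlongrightarrow> v $ i) F" by (intro tendsto_vec_nth assms(1))
    then show ?thesis using assms(2) by (auto intro: order_tendstoD)
  qed
  then show ?thesis by (simp add: eventually_all_finite)
qed

lemma pos_nonneg: "pos_mat X \<Longrightarrow> nonneg_mat X"
  by (auto simp: pos_mat_def nonneg_mat_def less_imp_le)

lemma quad_lemma:
  fixes a b :: real
  assumes ev: "\<forall>\<^sub>F s in at 0. a * s + b * s^2 \<ge> 0"
  shows "a = 0" "b \<ge> 0"
proof -
  from ev have evr: "\<forall>\<^sub>F s in at_right 0. a * s + b * s^2 \<ge> 0"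
    and evl: "\<forall>\<^sub>F s in at_left 0. a * s + b * s^2 \<ge> 0"
    by (auto simp: eventually_at_split)
  have r: "\<forall>\<^sub>F s in at_right 0. a + b * s \<ge> 0"
    using evr eventually_at_right_less[of 0]
  proof eventually_elim
    case (elim s)
    then have "s * (a + b * s) \<ge> 0" by (simp add: algebra_simps power2_eq_square)
    then show ?case using elim(2) by (simp add: zero_le_mult_iff)
  qed
  have lt0: "\<forall>\<^sub>F s in at_left (0::real). s < 0" unfolding eventually_at_filter by simp
  have l: "\<forall>\<^sub>F s in at_left 0. a + b * s \<le> 0"
    using evl lt0
  proof eventually_elim
    case (elim s)
    then have "s * (a + b * s) \<ge> 0" by (simp add: algebra_simps power2_eq_square)
    then show ?case using elim(2) by (simp add: zero_le_mult_iff)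
  qed
  have "a \<ge> 0"
    by (rule tendsto_lowerbound[OF _ r]) (auto intro!: tendsto_eq_intros simp: trivial_limit_at_right_real)
  moreover have "a \<le> 0"
    by (rule tendsto_upperbound[OF _ l]) (auto intro!: tendsto_eq_intros simp: trivial_limit_at_left_real)
  ultimately show a0: "a = 0" by simp
  have "\<forall>\<^sub>F s in at_right 0. s > 0 \<and> b * s^2 \<ge> 0"
    using evr eventually_at_right_less[of 0] by eventually_elim (simp add: a0)
  then obtain s where "s > 0" "b * s^2 \<ge> 0"
    using eventually_happens[of _ "at_right (0::real)"] by (auto simp: trivial_limit_at_right_real)
  then show "b \<ge> 0" by (simp add: zero_le_mult_iff)
qed



lemma tendsto_outer:
  fixes a b :: "'a \<Rightarrow> real^'n"
  assumes "(a \<longlongrightarrow> a0) F" "(b \<longlongrightarrow> b0) F"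
  shows "((\<lambda>t. outer (a t) (b t)) \<longlongrightarrow> outer a0 b0) F"
  unfolding outer_def
  by (intro tendsto_vec_lambda tendsto_mult tendsto_vec_nth assms)

lemma norm_sq_pert:
  fixes D E :: "real^'n^'n"
  shows "(norm (t *\<^sub>R E - D))^2 = D \<bullet> D - 2 * t * (D \<bullet> E) + t^2 * (E \<bullet> E)"
proof -
  have "(norm (t *\<^sub>R E - D))^2 = (t *\<^sub>R E - D) \<bullet> (t *\<^sub>R E - D)" by (simp add: power2_norm_eq_inner)
  also have "\<dots> = D \<bullet> D - 2 * t * (D \<bullet> E) + t^2 * (E \<bullet> E)"
    by (simp add: inner_diff_left inner_diff_right inner_commute[of E D] power2_eq_square algebra_simps)
  finally show ?thesis .
qed

lemma ev_01: "\<forall>\<^sub>F t in at_right (0::real). 0 < t \<and> t < 1"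
proof -
  have "\<forall>\<^sub>F t in at_right (0::real). t < 1"
    by (rule order_tendstoD(2)[OF tendsto_ident_at]) simp
  then show ?thesis using eventually_at_right_less[of "0::real"] by eventually_elim auto
qed

lemma ev_contra:
  fixes f :: "real \<Rightarrow> real"
  assumes "\<forall>\<^sub>F t in at_right (0::real). a \<le> f t" "\<forall>\<^sub>F t in at_right 0. f t < a"
  shows False
proof -
  have "\<forall>\<^sub>F t in at_right (0::real). False"
    using eventually_conj[OF assms] by (rule eventually_mono) auto
  then show False by (simp add: trivial_limit_at_right_real)
qed

lemma step_P1:
  fixes X :: "real^'n^'n"
  assumes Xp: "pos_mat X" and nn: "nonneg_vec v" and v0: "v \<noteq> 0" and ev: "X *v v = r *s v"
  shows "r > 0" "\<And>i. v$i > 0"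
proof -
  have Xx: "(X *v v)$i > 0" for i
  proof -
    from v0 obtain j where "v$j \<noteq> 0" by (auto simp: vec_eq_iff)
    then have j: "v$j > 0" using nn by (auto simp: nonneg_vec_def less_le)
    have "X$i$j * v$j > 0" using Xp j by (simp add: pos_mat_def)
    also have "\<dots> \<le> (\<Sum>k\<in>UNIV. X$i$k * v$k)"
      by (rule member_le_sum) (use Xp nn in \<open>auto intro: mult_nonneg_nonneg less_imp_le simp: pos_mat_def nonneg_vec_def\<close>)
    also have "\<dots> = (X *v v)$i" by (simp add: matrix_vector_mult_def)
    finally show ?thesis .
  qed
  have pr: "r * v$i > 0" for i using Xx[of i] ev by simp
  obtain i0 :: 'n where True by simp
  have "v$i0 \<ge> 0" using nn by (simp add: nonneg_vec_def)
  then show "r > 0" using pr[of i0] by (auto simp: zero_less_mult_iff)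
  then show "v$i > 0" for i using pr[of i] by (simp add: zero_less_mult_iff)
qed

lemma main_local:
  fixes A X :: "real^'n^'n" and v :: "real^'n"
  assumes A: "nonneg_mat A" and rhoA: "spectral_radius A > 1" and Xp: "pos_mat X"
    and lm: "local_min A X" and rv: "right_leading_eigvec X v" and nv: "norm v = 1"
  defines "z \<equiv> (A - mat 1) *v v"
  shows "X = A - outer z v" "spectral_radius X = 1" "\<And>i. v$i > 0" "z \<noteq> 0" "\<And>i. z$i \<ge> 0"
proof -
  have feX: "feasible X" using lm by (simp add: local_min_def)
  define \<rho> where "\<rho> = spectral_radius X"
  have rho1: "\<rho> \<le> 1" using feX by (simp add: feasible_def \<rho>_def)
  have nnv: "nonneg_vec v" and v0: "v \<noteq> 0" and Xv: "X *v v = \<rho> *\<^sub>R v"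
    using rv by (auto simp: right_leading_eigvec_def \<rho>_def scalar_mult_eq_scaleR)
  have vv: "v \<bullet> v = 1" using nv by (simp add: power2_norm_eq_inner[symmetric])
  have rpos: "\<rho> > 0" and vpos: "\<And>i. v$i > 0"
    using step_P1[OF Xp nnv v0, of \<rho>] Xv by (auto simp: scalar_mult_eq_scaleR)
  then show "\<And>i. v$i > 0" by blast
  define D where "D = A - X"
  define zD where "zD = D *v v"
  have Dnz: "D \<noteq> 0"
  proof
    assume "D = 0"
    then have "A = X" by (simp add: D_def)
    then show False using rho1 rhoA by (simp add: \<rho>_def)
  qed
  have normXA: "norm (X - A) = norm D" by (simp add: D_def norm_minus_commute)
  have XnA: "\<And>E t. X + t *\<^sub>R E - A = t *\<^sub>R E - D" by (simp add: D_def)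
  have Dout: "D = outer zD v"
  proof (rule ccontr)
    assume ne: "D \<noteq> outer zD v"
    define F where "F = D - outer zD v"
    have Fnz: "F \<noteq> 0" using ne by (simp add: F_def)
    have Fv: "F *v v = 0"
      by (simp add: F_def matrix_vector_mult_diff_rdistrib outer_mult vv zD_def)
    have DF: "D \<bullet> F = F \<bullet> F"
    proof -
      have "D = F + outer zD v" by (simp add: F_def)
      then have "D \<bullet> F = F \<bullet> F + outer zD v \<bullet> F" by (metis inner_add_left)
      then show ?thesis by (simp add: inner_outer Fv)
    qed
    define Y where "Y t = X + t *\<^sub>R F" for t :: real
    have tY: "(Y \<longlongrightarrow> X) (at_right 0)"
      unfolding Y_def by (auto intro!: tendsto_eq_intros)
    have fe: "\<forall>\<^sub>F t in at_right 0. feasible (Y t)"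
      using ev_pos[OF tY Xp]
    proof eventually_elim
      case (elim t)
      have Yv: "Y t *v v = \<rho> *\<^sub>R v"
        by (simp add: Y_def matrix_vector_mult_add_rdistrib scaleR_mv Fv Xv)
      have "spectral_radius (Y t) \<le> \<rho>"
        by (rule sr_le[OF pos_nonneg[OF elim] vpos]) (simp add: Yv)
      then show ?case using rho1 elim by (simp add: feasible_def pos_nonneg)
    qed
    have "\<forall>\<^sub>F t in at_right 0. norm (Y t - A) < norm (X - A)"
      using ev_01
    proof eventually_elim
      case (elim t)
      have FF: "F \<bullet> F > 0" using Fnz by simp
      have "(norm (Y t - A))^2 = D \<bullet> D - (2 * t - t^2) * (F \<bullet> F)"
        unfolding Y_def XnA norm_sq_pert DF by (simp add: algebra_simps)
      also have "\<dots> < D \<bullet> D"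
      proof -
        have "2 * t - t^2 > 0" using elim by (simp add: power2_eq_square)
        then show ?thesis using FF by simp
      qed
      also have "\<dots> = (norm (X - A))^2" by (simp add: normXA power2_norm_eq_inner)
      finally show "norm (Y t - A) < norm (X - A)" by (rule power2_less_imp_less) simp
    qed
    then show False using lm_eventually[OF lm tY fe] by (intro ev_contra)
  qed
  have Dv: "D *v v = zD" by (simp add: zD_def)
  have strict_dec: "\<forall>\<^sub>F t in at_right 0. norm (X + t *\<^sub>R E - A) < norm (X - A)"
    if EE: "E \<bullet> E > 0" and DE: "D \<bullet> E = E \<bullet> E" for E
    using ev_01
  proof eventually_elim
    case (elim t)
    have "(norm (X + t *\<^sub>R E - A))^2 = D \<bullet> D - (2 * t - t^2) * (E \<bullet> E)"
      unfolding XnA norm_sq_pert DE by (simp add: algebra_simps)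
    also have "\<dots> < D \<bullet> D"
    proof -
      have "2 * t - t^2 > 0" using elim by (simp add: power2_eq_square)
      then show ?thesis using EE by simp
    qed
    also have "\<dots> = (norm (X - A))^2" by (simp add: normXA power2_norm_eq_inner)
    finally show "norm (X + t *\<^sub>R E - A) < norm (X - A)" by (rule power2_less_imp_less) simp
  qed
  have rho_eq: "\<rho> = 1"
  proof (rule ccontr)
    assume "\<rho> \<noteq> 1"
    then have rl: "\<rho> < 1" using rho1 by simp
    define r where "r = (1 + \<rho>) / 2"
    have r1: "r < 1" using rl by (simp add: r_def)
    define Y where "Y t = X + t *\<^sub>R D" for t :: real
    have tY: "(Y \<longlongrightarrow> X) (at_right 0)"
      unfolding Y_def by (auto intro!: tendsto_eq_intros)
    have Yv: "Y t *v v = \<rho> *\<^sub>R v + t *\<^sub>R zD" for t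
      by (simp add: Y_def matrix_vector_mult_add_rdistrib scaleR_mv Xv Dv)
    have evi: "\<forall>\<^sub>F t in at_right 0. \<forall>i. \<rho> * v$i + t * zD$i < r * v$i"
    proof -
      have "\<forall>\<^sub>F t in at_right 0. \<rho> * v$i + t * zD$i < r * v$i" for i
      proof -
        have "((\<lambda>t. \<rho> * v$i + t * zD$i) \<longlongrightarrow> \<rho> * v$i + 0 * zD$i) (at_right 0)"
          by (intro tendsto_intros)
        moreover have "\<rho> * v$i + 0 * zD$i < r * v$i"
          using vpos[of i] rl by (simp add: r_def field_simps)
        ultimately show ?thesis by (auto intro: order_tendstoD)
      qed
      then show ?thesis by (simp add: eventually_all_finite)
    qed
    have fe: "\<forall>\<^sub>F t in at_right 0. feasible (Y t)"
      using ev_pos[OF tY Xp] evi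
    proof eventually_elim
      case (elim t)
      have "spectral_radius (Y t) \<le> r"
        by (rule sr_le[OF pos_nonneg[OF elim(1)] vpos]) (use elim(2) in \<open>simp add: Yv less_imp_le\<close>)
      then show ?case using r1 elim by (simp add: feasible_def pos_nonneg)
    qed
    have "\<forall>\<^sub>F t in at_right 0. norm (Y t - A) < norm (X - A)"
      using ev_01
    proof eventually_elim
      case (elim t)
      have "Y t - A = (1 - t) *\<^sub>R (- D)" by (simp add: Y_def D_def algebra_simps)
      then have "norm (Y t - A) = (1 - t) * norm D" using elim by simp
      also have "\<dots> < norm D" using elim Dnz by simp
      finally show ?case by (simp add: normXA)
    qed
    then show False using lm_eventually[OF lm tY fe] by (intro ev_contra)
  qed
  have Xv1: "X *v v = v" using Xv rho_eq by simp
  have zz: "zD = z"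
    by (simp add: zD_def z_def D_def matrix_vector_mult_diff_rdistrib Xv1)
  have "X = A - D" by (simp add: D_def)
  then show XAz: "X = A - outer z v" using Dout zz by simp
  show "spectral_radius X = 1" using rho_eq by (simp add: \<rho>_def)
  show "z \<noteq> 0"
  proof
    assume "z = 0"
    then have "D = 0" using Dout zz by (simp add: outer_def vec_eq_iff)
    then show False using Dnz by simp
  qed
  define e where "e = (\<chi> i. min (z$i) 0)"
  have e0: "e = 0"
  proof (rule ccontr)
    assume enz: "e \<noteq> 0"
    define E where "E = outer e v"
    have Ev: "E *v v = e" by (simp add: E_def outer_mult vv)
    have ze: "z \<bullet> e = e \<bullet> e"
      unfolding inner_vec_def e_def by (intro sum.cong) (auto simp: min_def)
    have EE: "E \<bullet> E > 0" using enz by (simp add: E_def outer_inner_outer vv)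
    have DE: "D \<bullet> E = E \<bullet> E" using Dout zz by (simp add: E_def outer_inner_outer vv ze)
    define Y where "Y t = X + t *\<^sub>R E" for t :: real
    have tY: "(Y \<longlongrightarrow> X) (at_right 0)"
      unfolding Y_def by (auto intro!: tendsto_eq_intros)
    have fe: "\<forall>\<^sub>F t in at_right 0. feasible (Y t)"
      using ev_pos[OF tY Xp] ev_01
    proof eventually_elim
      case (elim t)
      have "(Y t *v v)$i \<le> 1 * v$i" for i
      proof -
        have "(Y t *v v)$i = v$i + t * e$i"
          by (simp add: Y_def matrix_vector_mult_add_rdistrib scaleR_mv Xv1 Ev)
        moreover have "t * e$i \<le> 0" using elim(2) by (simp add: e_def mult_nonneg_nonpos)
        ultimately show ?thesis by simp
      qed
      then have "spectral_radius (Y t) \<le> 1"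
        by (rule sr_le[OF pos_nonneg[OF elim(1)] vpos])
      then show ?case using elim by (simp add: feasible_def pos_nonneg)
    qed
    have "\<forall>\<^sub>F t in at_right 0. norm (Y t - A) < norm (X - A)"
      using strict_dec[OF EE DE] by (simp add: Y_def)
    then show False using lm_eventually[OF lm tY fe] by (intro ev_contra)
  qed
  show "\<And>i. z$i \<ge> 0"
  proof -
    fix i
    have "min (z$i) 0 = 0" using e0 by (metis e_def vec_lambda_beta zero_index)
    then show "z$i \<ge> 0" by (simp add: min_def split: if_splits)
  qed
qed



lemma rayleigh:
  fixes A X :: "real^'n^'n" and v :: "real^'n"
  assumes A: "nonneg_mat A" and rhoA: "spectral_radius A > 1" and Xp: "pos_mat X"
    and lm: "local_min A X" and rv: "right_leading_eigvec X v" and nv: "norm v = 1"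
  defines "B \<equiv> A - mat 1"
  defines "z \<equiv> B *v v"
  shows "z \<bullet> (B *v h) = (z \<bullet> z) * (v \<bullet> h)" "(z \<bullet> z) * (h \<bullet> h) \<le> (B *v h) \<bullet> (B *v h)"
proof -
  note ml = main_local[OF A rhoA Xp lm rv nv, folded B_def, folded z_def]
  have vv: "v \<bullet> v = 1" using nv by (simp add: power2_norm_eq_inner[symmetric])
  define \<mu> where "\<mu> = z \<bullet> z"
  define w where "w s = v + s *\<^sub>R h" for s :: real
  define Y where "Y s = A - (1 / (w s \<bullet> w s)) *\<^sub>R outer (B *v w s) (w s)" for s
  have tw: "(w \<longlongrightarrow> v) (at 0)" unfolding w_def by (auto intro!: tendsto_eq_intros)
  have tBw: "((\<lambda>s. B *v w s) \<longlongrightarrow> z) (at 0)"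
    unfolding z_def by (rule bounded_linear.tendsto[OF matrix_vector_mul_bounded_linear tw])
  have tY: "(Y \<longlongrightarrow> X) (at 0)"
  proof -
    have "(Y \<longlongrightarrow> A - (1 / (v \<bullet> v)) *\<^sub>R outer z v) (at 0)"
      unfolding Y_def using vv
      by (intro tendsto_diff tendsto_const tendsto_scaleR tendsto_divide tendsto_inner tw tendsto_outer tBw) auto
    then show ?thesis using ml(1) vv by simp
  qed
  have fe: "\<forall>\<^sub>F s in at 0. feasible (Y s)"
    using ev_pos[OF tY Xp] ev_posvec[OF tw ml(3)]
  proof eventually_elim
    case (elim s)
    have "w s \<noteq> 0" using elim(2) by (metis zero_index less_irrefl)
    then have ww: "w s \<bullet> w s > 0" by simp
    have "Y s *v w s = A *v w s - (1 / (w s \<bullet> w s)) *\<^sub>R ((w s \<bullet> w s) *s (B *v w s))"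
      by (simp add: Y_def matrix_vector_mult_diff_rdistrib scaleR_mv outer_mult)
    also have "\<dots> = w s" using ww by (simp add: scalar_mult_eq_scaleR B_def matrix_vector_mult_diff_rdistrib)
    finally have Yw: "Y s *v w s = w s" .
    have "spectral_radius (Y s) \<le> 1"
      by (rule sr_le[OF pos_nonneg[OF elim(1)] elim(2)[rule_format]]) (simp add: Yw)
    then show ?case using elim by (simp add: feasible_def pos_nonneg)
  qed
  have ineq: "\<forall>\<^sub>F s in at 0. \<mu> * (w s \<bullet> w s) \<le> (B *v w s) \<bullet> (B *v w s)"
    using lm_eventually[OF lm tY fe] ev_posvec[OF tw ml(3)]
  proof eventually_elim
    case (elim s)
    have "w s \<noteq> 0" using elim(2) by (metis zero_index less_irrefl)
    then have ww: "w s \<bullet> w s > 0" by simp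
    have "norm (X - A) = norm z" using ml(1) nv by (simp add: norm_outer)
    then have "norm z \<le> norm (Y s - A)" using elim(1) by simp
    then have "(norm z)^2 \<le> (norm (Y s - A))^2" by (simp add: power_mono)
    also have "(norm (Y s - A))^2 = ((B *v w s) \<bullet> (B *v w s)) / (w s \<bullet> w s)"
    proof -
      have "Y s - A = - ((1 / (w s \<bullet> w s)) *\<^sub>R outer (B *v w s) (w s))" by (simp add: Y_def)
      then have "norm (Y s - A) = (1 / (w s \<bullet> w s)) * (norm (B *v w s) * norm (w s))"
        using ww by (simp add: norm_outer)
      then have "(norm (Y s - A))^2 = (1 / (w s \<bullet> w s))^2 * ((norm (B *v w s))^2 * (norm (w s))^2)"
        by (simp add: power_mult_distrib power_divide)
      also have "\<dots> = (1 / (w s \<bullet> w s))^2 * (((B *v w s) \<bullet> (B *v w s)) * (w s \<bullet> w s))"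
        by (simp add: power2_norm_eq_inner)
      also have "\<dots> = ((B *v w s) \<bullet> (B *v w s)) / (w s \<bullet> w s)" using ww by (simp add: power2_eq_square)
      finally show ?thesis .
    qed
    finally show ?case using ww by (simp add: \<mu>_def power2_norm_eq_inner pos_le_divide_eq)
  qed
  have "\<forall>\<^sub>F s in at 0. (2 * (z \<bullet> (B *v h)) - 2 * \<mu> * (v \<bullet> h)) * s
        + ((B *v h) \<bullet> (B *v h) - \<mu> * (h \<bullet> h)) * s^2 \<ge> 0"
    using ineq
  proof eventually_elim
    case (elim s)
    have Bw: "B *v w s = z + s *\<^sub>R (B *v h)"
      by (simp add: w_def z_def matrix_vector_right_distrib matrix_vector_mult_scaleR)
    have e1: "w s \<bullet> w s = 1 + 2 * s * (v \<bullet> h) + s^2 * (h \<bullet> h)"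
      by (simp add: w_def inner_add_left inner_add_right vv inner_commute power2_eq_square algebra_simps)
    have e2: "(B *v w s) \<bullet> (B *v w s) = \<mu> + 2 * s * (z \<bullet> (B *v h)) + s^2 * ((B *v h) \<bullet> (B *v h))"
      unfolding Bw by (simp add: \<mu>_def inner_add_left inner_add_right inner_commute power2_eq_square algebra_simps)
    show ?case using elim unfolding e1 e2 by (simp add: algebra_simps)
  qed
  note q = quad_lemma[OF this]
  show "z \<bullet> (B *v h) = (z \<bullet> z) * (v \<bullet> h)" using q(1) by (simp add: \<mu>_def)
  show "(z \<bullet> z) * (h \<bullet> h) \<le> (B *v h) \<bullet> (B *v h)" using q(2) by (simp add: \<mu>_def)
qed



declare transpose_matrix_vector[simp del] vector_transpose_matrix[simp del]

lemma transpose_B: "transpose (A - mat 1) = transpose A - (mat 1 :: real^'n^'n)"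
  by (simp add: transpose_def mat_def vec_eq_iff)

lemma smult_vm: "(c *s x) v* (A::real^'n^'n) = c *s (x v* A)"
  by (simp add: vector_matrix_mult_def vec_eq_iff sum_distrib_left mult_ac)

lemma full:
  fixes A X :: "real^'n^'n" and v :: "real^'n"
  assumes A: "nonneg_mat A" and rhoA: "spectral_radius A > 1" and Xp: "pos_mat X"
    and lm: "local_min A X" and rv: "right_leading_eigvec X v" and nv: "norm v = 1"
  defines "B \<equiv> A - mat 1"
  defines "z \<equiv> B *v v"
  defines "\<mu> \<equiv> z \<bullet> z"
  defines "M \<equiv> (mat 1 - transpose A) ** (mat 1 - A)"
      and "N \<equiv> (mat 1 - A) ** (mat 1 - transpose A)"
  shows "global_min A X" "smallest_eigenvalue M \<mu>" "M *v v = \<mu> *s v" "\<mu> > 0"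
    "left_leading_eigvec X ((1 / sqrt \<mu>) *s z)"
    "\<exists>\<nu>. smallest_eigenvalue N \<nu> \<and> N *v ((1 / sqrt \<mu>) *s z) = \<nu> *s ((1 / sqrt \<mu>) *s z)"
    "X = A - outer z v" "norm (X - A) = sqrt \<mu>" "nonneg_vec z" "nonneg_vec v"
proof -
  note ml = main_local[OF A rhoA Xp lm rv nv, folded B_def, folded z_def]
  note ra = rayleigh[OF A rhoA Xp lm rv nv, folded B_def, folded z_def, folded \<mu>_def]
  have vv: "v \<bullet> v = 1" using nv by (simp add: power2_norm_eq_inner[symmetric])
  show mpos: "\<mu> > 0" using ml(4) by (simp add: \<mu>_def)
  have Mv: "M *v x = transpose B *v (B *v x)" for x
  proof -
    have "M *v x = (mat 1 - transpose A) *v ((mat 1 - A) *v x)"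
      by (simp add: M_def matrix_vector_mul_assoc)
    also have "\<dots> = transpose B *v (B *v x)"
      by (simp add: B_def transpose_B matrix_vector_mult_diff_rdistrib matrix_vector_mult_diff_distrib)
    finally show ?thesis .
  qed
  have Nv: "N *v x = B *v (transpose B *v x)" for x
  proof -
    have "N *v x = (mat 1 - A) *v ((mat 1 - transpose A) *v x)"
      by (simp add: N_def matrix_vector_mul_assoc)
    also have "\<dots> = B *v (transpose B *v x)"
      by (simp add: B_def transpose_B matrix_vector_mult_diff_rdistrib matrix_vector_mult_diff_distrib)
    finally show ?thesis .
  qed
  have BTz: "transpose B *v z = \<mu> *\<^sub>R v"
  proof -
    define q where "q = transpose B *v z - \<mu> *\<^sub>R v"
    have "q \<bullet> q = q \<bullet> (transpose B *v z) - \<mu> * (q \<bullet> v)" by (simp add: q_def inner_diff_right)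
    also have "q \<bullet> (transpose B *v z) = z \<bullet> (B *v q)" using inner_transpose[of q B z] inner_commute by metis
    also have "\<dots> = \<mu> * (v \<bullet> q)" by (rule ra(1))
    finally have "q \<bullet> q = 0" by (simp add: inner_commute)
    then have "q = 0" by simp
    then show ?thesis by (metis q_def right_minus_eq)
  qed
  show Mvv: "M *v v = \<mu> *s v" by (simp add: Mv BTz z_def[symmetric] scalar_mult_eq_scaleR)
  have Mquad: "x \<bullet> (M *v x) = (B *v x) \<bullet> (B *v x)" for x unfolding Mv by (rule inner_transpose)
  show smM: "smallest_eigenvalue M \<mu>"
    unfolding smallest_eigenvalue_def
  proof (intro conjI allI impI)
    show "\<exists>v. v \<noteq> 0 \<and> M *v v = \<mu> *s v" using Mvv nv by (intro exI[of _ v]) auto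
    fix l x assume lx: "x \<noteq> 0 \<and> M *v x = l *s x"
    have xx: "x \<bullet> x > 0" using lx by simp
    have "\<mu> * (x \<bullet> x) \<le> l * (x \<bullet> x)"
      using ra(2)[of x] Mquad[of x] lx by (simp add: scalar_mult_eq_scaleR)
    then show "\<mu> \<le> l" using xx by simp
  qed
  have sm: "sqrt \<mu> > 0" using mpos by simp
  have znn: "nonneg_vec z" using ml(5) by (simp add: nonneg_vec_def)
  then show "nonneg_vec z" .
  show "nonneg_vec v" using rv by (simp add: right_leading_eigvec_def)
  show left: "left_leading_eigvec X ((1 / sqrt \<mu>) *s z)"
    unfolding left_leading_eigvec_def
  proof (intro conjI)
    show "nonneg_vec ((1 / sqrt \<mu>) *s z)" using znn sm by (simp add: nonneg_vec_def)
    show "(1 / sqrt \<mu>) *s z \<noteq> 0" using ml(4) sm by simp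
    have zX: "z v* X = z"
    proof -
      have "z v* X = z v* A - z v* outer z v" using ml(1) by (simp add: vector_matrix_mult_diff_rdistrib)
      also have "z v* A = transpose A *v z" by (rule transpose_matrix_vector[symmetric])
      also have "transpose A *v z = transpose B *v z + z"
        by (simp add: B_def transpose_B matrix_vector_mult_diff_rdistrib)
      also have "z v* outer z v = \<mu> *s v" by (simp add: vmult_outer \<mu>_def)
      finally show ?thesis by (simp add: BTz scalar_mult_eq_scaleR)
    qed
    show "(1 / sqrt \<mu>) *s z v* X = spectral_radius X *s ((1 / sqrt \<mu>) *s z)"
      by (simp add: smult_vm zX ml(2))
  qed
  have Binj: "B *v h = 0 \<Longrightarrow> h = 0" for h
  proof -
    assume "B *v h = 0"
    then have "\<mu> * (h \<bullet> h) \<le> 0" using ra(2)[of h] by simp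
    then have "h \<bullet> h \<le> 0" using mpos by (simp add: mult_le_0_iff)
    then show "h = 0" by (metis inner_eq_zero_iff order_antisym inner_ge_zero)
  qed
  have BTinj: "transpose B *v x = 0 \<Longrightarrow> x = 0" for x
  proof -
    have "invertible B"
      using Binj matrix_left_invertible_ker invertible_left_inverse by blast
    then have "invertible (transpose B)" by (rule transpose_invertible)
    then obtain C where "C ** transpose B = mat 1" using invertible_left_inverse by blast
    moreover assume "transpose B *v x = 0"
    ultimately show "x = 0" by (metis matrix_vector_mul_assoc matrix_vector_mul_lid matrix_vector_mult_0_right)
  qed
  show "\<exists>\<nu>. smallest_eigenvalue N \<nu> \<and> N *v ((1 / sqrt \<mu>) *s z) = \<nu> *s ((1 / sqrt \<mu>) *s z)"
  proof (intro exI conjI)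
    have Nz: "N *v z = \<mu> *s z" by (simp add: Nv BTz matrix_vector_mult_scaleR scalar_mult_eq_scaleR z_def[symmetric])
    show Nu: "N *v ((1 / sqrt \<mu>) *s z) = \<mu> *s ((1 / sqrt \<mu>) *s z)"
      by (simp add: scalar_mult_eq_scaleR matrix_vector_mult_scaleR Nz[unfolded scalar_mult_eq_scaleR])
    show "smallest_eigenvalue N \<mu>"
      unfolding smallest_eigenvalue_def
    proof (intro conjI allI impI)
      have "(1 / sqrt \<mu>) *s z \<noteq> 0" using left unfolding left_leading_eigvec_def by blast
      then show "\<exists>x. x \<noteq> 0 \<and> N *v x = \<mu> *s x" using Nu by blast
      fix l x assume lx: "x \<noteq> 0 \<and> N *v x = l *s x"
      define y where "y = transpose B *v x"
      have y0: "y \<noteq> 0" using BTinj lx by (auto simp: y_def)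
      have "M *v y = l *s y"
        using lx by (simp add: Mv y_def Nv[symmetric] scalar_mult_eq_scaleR matrix_vector_mult_scaleR)
      then show "\<mu> \<le> l" using smM y0 by (auto simp: smallest_eigenvalue_def)
    qed
  qed
  show XA: "X = A - outer z v" by (rule ml(1))
  show nXA: "norm (X - A) = sqrt \<mu>"
    using XA nv by (simp add: norm_minus_commute norm_outer \<mu>_def norm_eq_sqrt_inner[of z])
  show "global_min A X"
    unfolding global_min_def
  proof (intro conjI allI impI)
    show "feasible X" using lm by (simp add: local_min_def)
    fix Y :: "real^'n^'n" assume fY: "feasible Y"
    have lower: "sqrt \<mu> * norm h \<le> norm (B *v h)" for h
    proof -
      have "sqrt (\<mu> * (h \<bullet> h)) \<le> sqrt ((B *v h) \<bullet> (B *v h))" using ra(2)[of h] by simp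
      then show ?thesis by (simp add: real_sqrt_mult norm_eq_sqrt_inner)
    qed
    have "norm (Y - A) \<ge> sqrt \<mu>"
      by (rule global_bound[OF A rhoA sm lower[unfolded B_def]]) (use fY in \<open>auto simp: feasible_def\<close>)
    then show "norm (Y - A) \<ge> norm (X - A)" using nXA by simp
  qed
qed



lemma perron_unit:
  fixes X :: "real^'n^'n"
  assumes "pos_mat X"
  obtains v where "right_leading_eigvec X v" "norm v = 1"
proof -
  obtain v0 where v0: "\<And>i. v0$i > 0" "X *v v0 = spectral_radius X *s v0"
    using perron_pos[OF assms] by blast
  have nz: "v0 \<noteq> 0" using v0(1) by (metis zero_index less_irrefl)
  define v where "v = (1 / norm v0) *s v0"
  have "norm v = 1" using nz by (simp add: v_def scalar_mult_eq_scaleR)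
  moreover have "right_leading_eigvec X v"
    unfolding right_leading_eigvec_def
  proof (intro conjI)
    show "nonneg_vec v" using v0(1) by (simp add: v_def nonneg_vec_def less_imp_le)
    show "v \<noteq> 0" using nz by (simp add: v_def)
    show "X *v v = spectral_radius X *s v"
      using v0(2) by (simp add: v_def scalar_mult_eq_scaleR matrix_vector_mult_scaleR)
  qed
  ultimately show ?thesis using that by blast
qed

theorem theorem4:
  fixes A :: "real^'n^'n"
  assumes "nonneg_mat A" and "irreducible_mat A" and "spectral_radius A > 1"
  defines "M \<equiv> (mat 1 - transpose A) ** (mat 1 - A)"
      and "N \<equiv> (mat 1 - A) ** (mat 1 - transpose A)"
  shows "(\<forall>X. pos_mat X \<and> local_min A X \<longrightarrow>
            global_min A X \<and>
            (\<forall>v. right_leading_eigvec X v \<and> norm v = 1 \<longrightarrow>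
               (\<exists>\<mu>. smallest_eigenvalue M \<mu> \<and> M *v v = \<mu> *s v \<and> \<mu> > 0 \<and>
                  (\<forall>u. u = (1 / sqrt \<mu>) *s ((A - mat 1) *v v) \<longrightarrow>
                     left_leading_eigvec X u \<and>
                     (\<exists>\<nu>. smallest_eigenvalue N \<nu> \<and> N *v u = \<nu> *s u)) \<and>
                  X = A - outer ((A - mat 1) *v v) v \<and>
                  norm (X - A) = sqrt \<mu>)))
         \<and> ((\<not> (\<exists>\<mu> v. smallest_eigenvalue M \<mu> \<and> M *v v = \<mu> *s v \<and> nonneg_vec v \<and> norm v = 1 \<and>
                  nonneg_vec ((A - mat 1) *v v) \<and>
                  nonneg_mat (A - outer ((A - mat 1) *v v) v)))
            \<longrightarrow> \<not> (\<exists>X. pos_mat X \<and> local_min A X))"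
proof -
  note A = assms(1) and rhoA = assms(3)
  have P1: "global_min A X \<and>
            (\<forall>v. right_leading_eigvec X v \<and> norm v = 1 \<longrightarrow>
               (\<exists>\<mu>. smallest_eigenvalue M \<mu> \<and> M *v v = \<mu> *s v \<and> \<mu> > 0 \<and>
                  (\<forall>u. u = (1 / sqrt \<mu>) *s ((A - mat 1) *v v) \<longrightarrow>
                     left_leading_eigvec X u \<and>
                     (\<exists>\<nu>. smallest_eigenvalue N \<nu> \<and> N *v u = \<nu> *s u)) \<and>
                  X = A - outer ((A - mat 1) *v v) v \<and>
                  norm (X - A) = sqrt \<mu>))"
    if Xp: "pos_mat X" and lm: "local_min A X" for X
  proof (intro conjI allI impI)
    obtain v1 where v1: "right_leading_eigvec X v1" "norm v1 = 1" using perron_unit[OF Xp] by blast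
    show "global_min A X" using full(1)[OF A rhoA Xp lm v1] .
    fix v assume v: "right_leading_eigvec X v \<and> norm v = 1"
    note F = full[OF A rhoA Xp lm conjunct1[OF v] conjunct2[OF v], folded M_def N_def]
    show "\<exists>\<mu>. smallest_eigenvalue M \<mu> \<and> M *v v = \<mu> *s v \<and> \<mu> > 0 \<and>
                  (\<forall>u. u = (1 / sqrt \<mu>) *s ((A - mat 1) *v v) \<longrightarrow>
                     left_leading_eigvec X u \<and>
                     (\<exists>\<nu>. smallest_eigenvalue N \<nu> \<and> N *v u = \<nu> *s u)) \<and>
                  X = A - outer ((A - mat 1) *v v) v \<and>
                  norm (X - A) = sqrt \<mu>"
      using F(2-8) by blast
  qed
  have P2: False if Xp: "pos_mat X" and lm: "local_min A X"
    and no: "\<not> (\<exists>\<mu> v. smallest_eigenvalue M \<mu> \<and> M *v v = \<mu> *s v \<and> nonneg_vec v \<and> norm v = 1 \<and>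
                  nonneg_vec ((A - mat 1) *v v) \<and>
                  nonneg_mat (A - outer ((A - mat 1) *v v) v))" for X
  proof -
    obtain v where v: "right_leading_eigvec X v" "norm v = 1" using perron_unit[OF Xp] by blast
    note F = full[OF A rhoA Xp lm v, folded M_def N_def]
    have "nonneg_mat (A - outer ((A - mat 1) *v v) v)" using F(7) Xp by (simp add: pos_nonneg)
    then show False using no F(2,3,9,10) v(2) by blast
  qed
  show ?thesis using P1 P2 by blast
qed

end
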